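(* Let $A$ be a Banach algebra. If $A$ contains no subspace isomorphic to $\ell^1$, then $\mathrm{wpL}(A)=\mathrm{cc}(A)=\mathrm{ap}(A)$.
   Context: For a Banach algebra $A$, $f\in A^*$ and $a\in A$, define $fa,af\in A^*$ by $fa(x)=f(ax)$ and $af(x)=f(xa)$. The operators $T_f,S_f:A\to A^*$ are $T_f(a)=fa$, $S_f(a)=af$. A set $E\subseteq A^*$ is an L-set if for every weakly null sequence $(x_n)$ in $A$, $\lim_n\sup_{g\in E}|g(x_n)|=0$. A set is weakly precompact if every sequence in it has a weakly Cauchy subsequence. $\mathrm{wpL}(A)$ is the set of $f\in A^*$ such that $T_f$ maps weakly precompact sets onto L-sets; $\mathrm{lcc}(A)$ (resp. $\mathrm{rcc}(A)$) is the set of $f$ such that $T_f$ (resp. $S_f$) is completely continuous (maps weakly null sequences to norm null sequences); $\mathrm{cc}(A)=\mathrm{lcc}(A)\cap\mathrm{rcc}(A)$; $\mathrm{ap}(A)$ is the set of $f$ such that $T_f$ is compact. *)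

theory Defs
  imports "HOL-Analysis.Analysis"
begin

text \<open>Module actions: (f a)(x) = f(a x) and (a f)(x) = f(x a).\<close>
definition dual_lmod :: "('a::real_normed_algebra \<Rightarrow>\<^sub>L real) \<Rightarrow> 'a \<Rightarrow> ('a \<Rightarrow>\<^sub>L real)" where
  "dual_lmod f a = f o\<^sub>L blinfun_mult_right a"

definition dual_rmod :: "'a::real_normed_algebra \<Rightarrow> ('a \<Rightarrow>\<^sub>L real) \<Rightarrow> ('a \<Rightarrow>\<^sub>L real)" where
  "dual_rmod a f = f o\<^sub>L blinfun_mult_left a"

definition T_op :: "('a::real_normed_algebra \<Rightarrow>\<^sub>L real) \<Rightarrow> 'a \<Rightarrow> ('a \<Rightarrow>\<^sub>L real)" where
  "T_op f = (\<lambda>a. dual_lmod f a)"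

definition S_op :: "('a::real_normed_algebra \<Rightarrow>\<^sub>L real) \<Rightarrow> 'a \<Rightarrow> ('a \<Rightarrow>\<^sub>L real)" where
  "S_op f = (\<lambda>a. dual_rmod a f)"

definition weakly_null :: "(nat \<Rightarrow> 'a::real_normed_vector) \<Rightarrow> bool" where
  "weakly_null x \<longleftrightarrow> (\<forall>g::'a \<Rightarrow>\<^sub>L real. (\<lambda>n. g (x n)) \<longlonglongrightarrow> 0)"

definition weakly_cauchy :: "(nat \<Rightarrow> 'a::real_normed_vector) \<Rightarrow> bool" where
  "weakly_cauchy x \<longleftrightarrow> (\<forall>g::'a \<Rightarrow>\<^sub>L real. Cauchy (\<lambda>n. g (x n)))"

definition weakly_precompact :: "'a::real_normed_vector set \<Rightarrow> bool" where
  "weakly_precompact S \<longleftrightarrow>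
     (\<forall>x. (\<forall>n. x n \<in> S) \<longrightarrow> (\<exists>r::nat \<Rightarrow> nat. strict_mono r \<and> weakly_cauchy (x \<circ> r)))"

definition L_set :: "('a::real_normed_vector \<Rightarrow>\<^sub>L real) set \<Rightarrow> bool" where
  "L_set E \<longleftrightarrow> (\<forall>x. weakly_null x \<longrightarrow>
     (\<forall>e>0. \<forall>\<^sub>F n in sequentially. \<forall>g\<in>E. \<bar>g (x n)\<bar> \<le> e))"

definition completely_continuous :: "('a::real_normed_vector \<Rightarrow> 'b::real_normed_vector) \<Rightarrow> bool" where
  "completely_continuous T \<longleftrightarrow> (\<forall>x. weakly_null x \<longrightarrow> (\<lambda>n. T (x n)) \<longlonglongrightarrow> 0)"

definition compact_op :: "('a::real_normed_vector \<Rightarrow> 'b::real_normed_vector) \<Rightarrow> bool" where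
  "compact_op T \<longleftrightarrow> compact (closure (T ` ball 0 1))"

definition wpL :: "('a::real_normed_algebra \<Rightarrow>\<^sub>L real) set" where
  "wpL = {f. \<forall>Y::'a set. weakly_precompact Y \<longrightarrow> L_set (T_op f ` Y)}"

definition lcc :: "('a::real_normed_algebra \<Rightarrow>\<^sub>L real) set" where
  "lcc = {f. completely_continuous (T_op f)}"

definition rcc :: "('a::real_normed_algebra \<Rightarrow>\<^sub>L real) set" where
  "rcc = {f. completely_continuous (S_op f)}"

definition cc :: "('a::real_normed_algebra \<Rightarrow>\<^sub>L real) set" where
  "cc = lcc \<inter> rcc"

definition ap :: "('a::real_normed_algebra \<Rightarrow>\<^sub>L real) set" where
  "ap = {f. compact_op (T_op f)}"

text \<open>ell^1 = {a :: nat \<Rightarrow> real. summable |a|} with norm sum |a n|.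
  A contains a subspace isomorphic to ell^1 iff there is a linear map on ell^1
  into A that is an isomorphism onto its range.\<close>
definition contains_l1 :: "'a::real_normed_vector itself \<Rightarrow> bool" where
  "contains_l1 _ \<longleftrightarrow> (\<exists>(J::(nat \<Rightarrow> real) \<Rightarrow> 'a) c C. 0 < c \<and>
     (\<forall>a b. summable (\<lambda>n. \<bar>a n\<bar>) \<longrightarrow> summable (\<lambda>n. \<bar>b n\<bar>) \<longrightarrow> J (\<lambda>n. a n + b n) = J a + J b) \<and>
     (\<forall>a t. summable (\<lambda>n. \<bar>a n\<bar>) \<longrightarrow> J (\<lambda>n. t * a n) = t *\<^sub>R J a) \<and>
     (\<forall>a. summable (\<lambda>n. \<bar>a n\<bar>) \<longrightarrow>
        c * (\<Sum>n. \<bar>a n\<bar>) \<le> norm (J a) \<and> norm (J a) \<le> C * (\<Sum>n. \<bar>a n\<bar>)))"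

end

theory Submission
  imports Defs
begin

lemma UB:
  fixes x :: "nat \<Rightarrow> 'a::real_normed_vector"
  assumes bd: "\<And>g::('a \<Rightarrow>\<^sub>L real). \<exists>B. \<forall>n. \<bar>blinfun_apply g (x n)\<bar> \<le> B"
  shows "\<exists>M. \<forall>n. \<forall>g::('a \<Rightarrow>\<^sub>L real). \<bar>blinfun_apply g (x n)\<bar> \<le> M * norm g"
proof -
  define F where "F k = {g::('a \<Rightarrow>\<^sub>L real). \<forall>n. \<bar>blinfun_apply g (x n)\<bar> \<le> real k}" for k :: nat
  have clo: "closed (F k)" for k
  proof -
    have "F k = (\<Inter>n. {g. \<bar>blinfun_apply g (x n)\<bar> \<le> real k})"
      by (auto simp: F_def)
    moreover have "closed {g::('a \<Rightarrow>\<^sub>L real). \<bar>blinfun_apply g (x n)\<bar> \<le> real k}" for n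
      by (intro closed_Collect_le continuous_intros) 
    ultimately show ?thesis by auto
  qed
  have un: "\<Union>(range F) = UNIV"
  proof safe
    fix g :: "'a \<Rightarrow>\<^sub>L real"
    obtain B where "\<forall>n. \<bar>blinfun_apply g (x n)\<bar> \<le> B" using bd by blast
    moreover obtain k::nat where "B \<le> real k" using real_arch_simple by blast
    ultimately have "g \<in> F k" unfolding F_def by (auto intro: order_trans)
    then show "g \<in> \<Union>(range F)" by blast
  qed simp
  have "\<exists>k. interior (F k) \<noteq> {}"
  proof (rule ccontr)
    assume "\<not> ?thesis"
    then have "euclidean interior_of \<Union>(range F) = {}"
      by (intro Baire_category_alt) (auto simp: completely_metrizable_space_euclidean clo closed_closedin[symmetric])
    with un show False by simp
  qed
  then obtain k g0 where "g0 \<in> interior (F k)" by blast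
  then obtain d where d: "d > 0" "ball g0 d \<subseteq> F k"
    using open_contains_ball interior_subset by (metis open_interior subset_trans)
  have "\<bar>blinfun_apply g (x n)\<bar> \<le> (4 * real k / d) * norm g" for g :: "'a \<Rightarrow>\<^sub>L real" and n
  proof (cases "g = 0")
    case True then show ?thesis by simp
  next
    case False
    then have ng: "norm g > 0" by simp
    define h where "h = (d / 2 / norm g) *\<^sub>R g"
    have "norm h = d/2" using ng d by (simp add: h_def)
    then have "g0 + h \<in> ball g0 d" using d by (simp add: dist_norm)
    then have "g0 + h \<in> F k" using d by blast
    then have a: "\<bar>(g0 + h) (x n)\<bar> \<le> real k" by (simp add: F_def)
    have "g0 \<in> F k" using d by auto
    then have b: "\<bar>g0 (x n)\<bar> \<le> real k" by (simp add: F_def)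
    have "\<bar>h (x n)\<bar> \<le> 2 * real k" using a b by (simp add: blinfun.add_left)
    then have "(d / 2 / norm g) * \<bar>blinfun_apply g (x n)\<bar> \<le> 2 * real k"
      using d ng by (simp add: h_def abs_mult blinfun.scaleR_left)
    then show ?thesis using d ng by (simp add: field_simps)
  qed
  then show ?thesis by blast
qed

definition conv :: "(nat \<Rightarrow> 'w set) \<Rightarrow> (nat \<Rightarrow> 'w set) \<Rightarrow> 'w set \<Rightarrow> nat set \<Rightarrow> bool" where
  "conv A B C L \<longleftrightarrow> (\<forall>w\<in>C. finite {n\<in>L. w \<in> A n} \<or> finite {n\<in>L. w \<in> B n})"

definition osc :: "(nat \<Rightarrow> 'w set) \<Rightarrow> (nat \<Rightarrow> 'w set) \<Rightarrow> 'w set \<Rightarrow> nat set \<Rightarrow> bool" where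
  "osc A B C L \<longleftrightarrow> (\<forall>L'\<subseteq>L. infinite L' \<longrightarrow> \<not> conv A B C L')"

lemma osc_nonempty: "osc A B C L \<Longrightarrow> infinite L \<Longrightarrow> C \<noteq> {}"
  unfolding osc_def conv_def by auto

lemma infinite_gt: "infinite (S::nat set) \<Longrightarrow> infinite {m\<in>S. n < m}"
proof -
  assume "infinite S"
  moreover have "S \<subseteq> {m\<in>S. n < m} \<union> {..n}" by auto
  ultimately show ?thesis using finite_subset by (metis finite_Un finite_atMost)
qed

lemma osc_step:
  assumes fin: "finite \<C>" and infL: "infinite L" and oscC: "\<forall>C\<in>\<C>. osc A B C L"
  shows "\<exists>n\<in>L. \<exists>L'\<subseteq>L. infinite L' \<and> (\<forall>m\<in>L'. n < m) \<and>
           (\<forall>C\<in>\<C>. osc A B (C \<inter> A n) L' \<and> osc A B (C \<inter> B n) L')"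
proof (rule ccontr)
  assume H0: "\<not> ?thesis"
  define Q where "Q S T \<longleftrightarrow> fst T \<in> \<C> \<and> snd (snd T) \<subseteq> {m\<in>S. Inf S < m} \<and> infinite (snd (snd T)) \<and>
      conv A B (fst T \<inter> (if fst (snd T) then A (Inf S) else B (Inf S))) (snd (snd T))"
    for S :: "nat set" and T :: "'a set \<times> bool \<times> nat set"
  have "\<exists>T. infinite S \<and> S \<subseteq> L \<longrightarrow> Q S T" for S
  proof (cases "infinite S \<and> S \<subseteq> L")
    case True
    define n where "n = Inf S"
    have "S \<noteq> {}" using True by auto
    then have nS: "n \<in> S" unfolding n_def by (rule Inf_nat_def1)
    define L' where "L' = {m\<in>S. n < m}"
    have L'inf: "infinite L'" using True infinite_gt unfolding L'_def by blast
    have "L' \<subseteq> L" using True by (auto simp: L'_def)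
    have "n \<in> L" using nS True by auto
    moreover have "\<forall>m\<in>L'. n < m" by (auto simp: L'_def)
    ultimately obtain C where "C \<in> \<C>" "\<not> osc A B (C \<inter> A n) L' \<or> \<not> osc A B (C \<inter> B n) L'"
      using H0 \<open>L' \<subseteq> L\<close> L'inf by blast
    then obtain X where CX: "C \<in> \<C>" "X = A n \<or> X = B n" "\<not> osc A B (C \<inter> X) L'"
      by blast
    then obtain L'' where L'': "L'' \<subseteq> L'" "infinite L''" "conv A B (C \<inter> X) L''"
      unfolding osc_def by blast
    have "Q S (C, X = A n, L'')"
      using CX L'' unfolding Q_def L'_def n_def by (auto split: if_splits)
    then show ?thesis by blast
  qed auto
  then obtain F where F: "\<And>S. infinite S \<Longrightarrow> S \<subseteq> L \<Longrightarrow> Q S (F S)" by metis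
  define Sq where "Sq = rec_nat L (\<lambda>_ S. snd (snd (F S)))"
  have Sq0: "Sq 0 = L" and SqS: "Sq (Suc i) = snd (snd (F (Sq i)))" for i by (simp_all add: Sq_def)
  have SqI: "infinite (Sq i) \<and> Sq i \<subseteq> L" for i
  proof (induction i)
    case 0 then show ?case using infL Sq0 by simp
  next
    case (Suc i)
    then have "Q (Sq i) (F (Sq i))" using F by blast
    then show ?case using Suc unfolding Q_def SqS by auto
  qed
  have Qi: "Q (Sq i) (F (Sq i))" for i using F SqI by blast
  define l where "l i = Inf (Sq i)" for i
  have lSq: "l i \<in> Sq i" for i
    unfolding l_def using SqI[of i] by (intro Inf_nat_def1) auto
  have Sq_sub: "Sq (Suc i) \<subseteq> {m \<in> Sq i. l i < m}" for i
    using Qi[of i] unfolding Q_def SqS l_def by auto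
  have Sq_mono: "Sq j \<subseteq> Sq i" if "i \<le> j" for i j
    using that
  proof (induction j)
    case 0 then show ?case by simp
  next
    case (Suc j)
    then show ?case using Sq_sub[of j] by (auto simp: le_Suc_eq)
  qed
  have l_mono: "strict_mono l"
    unfolding strict_mono_Suc_iff using Sq_sub lSq by blast
  define f where "f i = (fst (F (Sq i)), fst (snd (F (Sq i))))" for i
  have "f ` UNIV \<subseteq> \<C> \<times> (UNIV::bool set)" using Qi unfolding f_def Q_def by auto
  moreover have "finite (\<C> \<times> (UNIV::bool set))" using fin by simp
  ultimately have "finite (f ` UNIV)" by (rule finite_subset)
  then obtain i0 where "infinite {i \<in> UNIV. f i = f i0}"
    using pigeonhole_infinite[of UNIV f] by auto
  then have infI: "infinite {i. f i = f i0}" by simp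
  define I where "I = {i. f i = f i0}"
  define C where "C = fst (f i0)"
  define b where "b = snd (f i0)"
  have CC: "C \<in> \<C>" using Qi[of i0] unfolding C_def f_def Q_def by auto
  define LL where "LL = l ` I"
  have infLL: "infinite LL" unfolding LL_def I_def
    using infI finite_imageD l_mono strict_mono_imp_inj_on inj_on_subset by (metis subset_UNIV)
  have LLL: "LL \<subseteq> L" unfolding LL_def using lSq SqI by blast
  then have "\<not> conv A B C LL" using oscC CC infLL unfolding osc_def by blast
  then obtain w where w: "w \<in> C" "infinite {n\<in>LL. w \<in> A n}" "infinite {n\<in>LL. w \<in> B n}"
    unfolding conv_def by blast
  define Xs where "Xs = (if b then A else B)"
  have "infinite {n\<in>LL. w \<in> Xs n}" using w unfolding Xs_def by auto
  then obtain n where "n \<in> LL" "w \<in> Xs n" by (metis (no_types, lifting) empty_iff finite.emptyI mem_Collect_eq subsetI subset_antisym)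
  then obtain i where i: "i \<in> I" "n = l i" unfolding LL_def by auto
  have fi: "f i = f i0" using i I_def by auto
  have convi: "conv A B (C \<inter> Xs (l i)) (Sq (Suc i))"
    using Qi[of i] fi unfolding Q_def SqS C_def b_def Xs_def f_def l_def by (auto split: if_splits)
  have wCX: "w \<in> C \<inter> Xs (l i)" using w \<open>w \<in> Xs n\<close> i by auto
  have sub: "{m\<in>LL. P m} \<subseteq> {m\<in>Sq (Suc i). P m} \<union> l ` {..i}" for P
  proof
    fix m assume "m \<in> {m\<in>LL. P m}"
    then obtain j where j: "m = l j" "P m" unfolding LL_def by auto
    show "m \<in> {m\<in>Sq (Suc i). P m} \<union> l ` {..i}"
    proof (cases "j \<le> i")
      case True then show ?thesis using j by auto
    next
      case False
      then have "Sq j \<subseteq> Sq (Suc i)" using Sq_mono by simp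
      then show ?thesis using j lSq[of j] by auto
    qed
  qed
  have "finite {m\<in>Sq (Suc i). w \<in> A m} \<or> finite {m\<in>Sq (Suc i). w \<in> B m}"
    using convi wCX unfolding conv_def by blast
  then show False
  proof
    assume "finite {m\<in>Sq (Suc i). w \<in> A m}"
    then have "finite {m\<in>LL. w \<in> A m}" using sub[of "\<lambda>m. w \<in> A m"] finite_subset by blast
    then show False using w by blast
  next
    assume "finite {m\<in>Sq (Suc i). w \<in> B m}"
    then have "finite {m\<in>LL. w \<in> B m}" using sub[of "\<lambda>m. w \<in> B m"] finite_subset by blast
    then show False using w by blast
  qed
qed

lemma osc_indep:
  assumes oscO: "osc A B \<Omega> L0" and infL0: "infinite L0"
  shows "\<exists>\<nu>. strict_mono \<nu> \<and> range \<nu> \<subseteq> L0 \<and>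
     (\<forall>k (\<epsilon>::nat\<Rightarrow>bool). \<exists>w\<in>\<Omega>. \<forall>i<k. if \<epsilon> i then w \<in> B (\<nu> i) else w \<in> A (\<nu> i))"
proof -
  define Inv where "Inv L \<C> \<longleftrightarrow> infinite L \<and> finite \<C> \<and> (\<forall>C\<in>\<C>. osc A B C L)"
    for L :: "nat set" and \<C> :: "'a set set"
  define P where "P L \<C> T \<longleftrightarrow> fst T \<in> L \<and> snd T \<subseteq> L \<and> infinite (snd T) \<and> (\<forall>m\<in>snd T. fst T < m) \<and>
           (\<forall>C\<in>\<C>. osc A B (C \<inter> A (fst T)) (snd T) \<and> osc A B (C \<inter> B (fst T)) (snd T))"
    for L \<C> and T :: "nat \<times> nat set"
  have "\<exists>T. Inv L \<C> \<longrightarrow> P L \<C> T" for L \<C>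
    using osc_step[of \<C> L A B] unfolding Inv_def P_def by force
  then obtain G where G: "\<And>L \<C>. Inv L \<C> \<Longrightarrow> P L \<C> (G L \<C>)" by metis
  define nxt where "nxt S = (let n = fst (G (fst S) (snd S)) in
      (snd (G (fst S) (snd S)), (\<lambda>C. C \<inter> A n) ` snd S \<union> (\<lambda>C. C \<inter> B n) ` snd S))"
    for S :: "nat set \<times> 'a set set"
  define st where "st = rec_nat (L0, {\<Omega>}) (\<lambda>_ S. nxt S)"
  have st0: "st 0 = (L0, {\<Omega>})" and stS: "st (Suc k) = nxt (st k)" for k by (simp_all add: st_def)
  define \<nu> where "\<nu> k = fst (G (fst (st k)) (snd (st k)))" for k
  have fst_stS: "fst (st (Suc k)) = snd (G (fst (st k)) (snd (st k)))" for k
    by (simp add: stS nxt_def Let_def)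
  have snd_stS: "snd (st (Suc k)) = (\<lambda>C. C \<inter> A (\<nu> k)) ` snd (st k) \<union> (\<lambda>C. C \<inter> B (\<nu> k)) ` snd (st k)" for k
    by (simp add: stS nxt_def Let_def \<nu>_def)
  have inv: "Inv (fst (st k)) (snd (st k))" for k
  proof (induction k)
    case 0 then show ?case using oscO infL0 by (simp add: st0 Inv_def)
  next
    case (Suc k)
    have "P (fst (st k)) (snd (st k)) (G (fst (st k)) (snd (st k)))" using G Suc by blast
    then show ?case using Suc unfolding Inv_def P_def fst_stS snd_stS \<nu>_def by auto
  qed
  have Pk: "P (fst (st k)) (snd (st k)) (G (fst (st k)) (snd (st k)))" for k using G inv by blast
  have nuL: "\<nu> k \<in> fst (st k)" for k using Pk[of k] unfolding P_def \<nu>_def by auto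
  have Lsub: "fst (st (Suc k)) \<subseteq> fst (st k)" for k using Pk[of k] unfolding P_def fst_stS by auto
  have Lgt: "\<forall>m \<in> fst (st (Suc k)). \<nu> k < m" for k using Pk[of k] unfolding P_def fst_stS \<nu>_def by auto
  have sm: "strict_mono \<nu>" unfolding strict_mono_Suc_iff using Lgt nuL by blast
  have LL0: "fst (st k) \<subseteq> L0" for k
    by (induction k) (use Lsub st0 in auto)
  have rng: "range \<nu> \<subseteq> L0" using nuL LL0 by blast
  define pat where "pat k \<epsilon> = {w\<in>\<Omega>. \<forall>i<k. if \<epsilon> i then w \<in> B (\<nu> i) else w \<in> A (\<nu> i)}" for k \<epsilon>
  have patin: "pat k \<epsilon> \<in> snd (st k)" for k \<epsilon>
  proof (induction k)
    case 0 then show ?case by (simp add: pat_def st0)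
  next
    case (Suc k)
    have "pat (Suc k) \<epsilon> = pat k \<epsilon> \<inter> (if \<epsilon> k then B (\<nu> k) else A (\<nu> k))"
      unfolding pat_def by (auto simp: less_Suc_eq)
    then show ?case using Suc unfolding snd_stS by auto
  qed
  have "\<exists>w\<in>\<Omega>. \<forall>i<k. if \<epsilon> i then w \<in> B (\<nu> i) else w \<in> A (\<nu> i)" for k \<epsilon>
  proof -
    have "pat k \<epsilon> \<noteq> {}" using inv[of k] patin[of k \<epsilon>] osc_nonempty unfolding Inv_def by blast
    then show ?thesis unfolding pat_def by blast
  qed
  then show ?thesis using sm rng by blast
qed

lemma no_osc_convergent:
  fixes a :: "nat \<Rightarrow> real"
  assumes bd: "\<And>i. \<bar>a i\<bar> \<le> K"
    and H: "\<And>q1 q2::rat. of_rat q1 < (of_rat q2::real) \<Longrightarrow>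
              finite {i. a i \<le> of_rat q1} \<or> finite {i. a i \<ge> of_rat q2}"
  shows "convergent a"
proof -
  define U where "U = {t. infinite {i. a i \<ge> t}}"
  have "{i. a i \<ge> -K} = UNIV" 
  proof -
    have "a i \<ge> -K" for i using bd[of i] by linarith
    then show ?thesis by blast
  qed
  then have "-K \<in> U" unfolding U_def by simp
  then have Une: "U \<noteq> {}" by blast
  have Ub: "t \<le> K" if "t \<in> U" for t
  proof (rule ccontr)
    assume "\<not> t \<le> K"
    then have "a i < t" for i using bd[of i] by linarith
    then have "{i. a i \<ge> t} = {}" by (simp add: not_le)
    then show False using that unfolding U_def by simp
  qed
  have bdd: "bdd_above U" using Ub by (auto simp: bdd_above_def)
  define L where "L = Sup U"
  have "a \<longlonglongrightarrow> L"
  proof (rule LIMSEQ_I)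
    fix e :: real assume e: "e > 0"
    have "L + e/2 \<notin> U" using cSup_upper[OF _ bdd] e unfolding L_def by force
    then have fin1: "finite {i. a i \<ge> L + e/2}" unfolding U_def by simp
    obtain r where r: "r \<in> \<rat>" "L - e < r" "r < L - e/2" using Rats_dense_in_real[of "L - e" "L - e/2"] e by auto
    obtain s where s: "s \<in> \<rat>" "r < s" "s < L" using Rats_dense_in_real[of r L] r e by auto
    obtain t where t: "t \<in> U" "s < t" using less_cSup_iff[OF Une bdd] s unfolding L_def by auto
    have "infinite {i. a i \<ge> s}"
    proof -
      have "{i. a i \<ge> t} \<subseteq> {i. a i \<ge> s}" using t by auto
      then show ?thesis using t unfolding U_def using finite_subset by blast
    qed
    moreover obtain q1 where q1: "r = of_rat q1" using r Rats_cases by blast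
    moreover obtain q2 where q2: "s = of_rat q2" using s Rats_cases by blast
    ultimately have fin2: "finite {i. a i \<le> r}" using H[of q1 q2] s by auto
    have "finite ({i. a i \<ge> L + e/2} \<union> {i. a i \<le> r})" using fin1 fin2 by simp
    then obtain N where N: "\<forall>i\<ge>N. i \<notin> {i. a i \<ge> L + e/2} \<union> {i. a i \<le> r}"
      by (metis finite_nat_set_iff_bounded_le not_less_eq_eq order_trans)
    show "\<exists>N. \<forall>n\<ge>N. norm (a n - L) < e"
    proof (intro exI allI impI)
      fix n assume "N \<le> n"
      then have "a n < L + e/2" "a n > r" using N by auto
      then show "norm (a n - L) < e" using r by auto
    qed
  qed
  then show ?thesis by (auto simp: convergent_def)
qed

lemma l1_from_indep:
  fixes y :: "nat \<Rightarrow> 'a::banach"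
  assumes ybd: "\<And>n. norm (y n) \<le> 1" and rs: "r < s"
    and ind: "\<And>k (\<epsilon>::nat\<Rightarrow>bool). \<exists>g::('a \<Rightarrow>\<^sub>L real). norm g \<le> 1 \<and>
        (\<forall>i<k. if \<epsilon> i then s \<le> blinfun_apply g (y i) else blinfun_apply g (y i) \<le> r)"
  shows "contains_l1 TYPE('a)"
proof -
  define J where "J a = (\<Sum>i. a i *\<^sub>R y i)" for a :: "nat \<Rightarrow> real"
  have sn: "summable (\<lambda>i. norm (a i *\<^sub>R y i))" if "summable (\<lambda>n. \<bar>a n\<bar>)" for a
  proof (rule summable_comparison_test[OF _ that])
    show "\<exists>N. \<forall>n\<ge>N. norm (norm (a n *\<^sub>R y n)) \<le> \<bar>a n\<bar>"
      using ybd by (auto intro!: exI[of _ 0] mult_left_le simp: abs_mult)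
  qed
  have sm: "summable (\<lambda>i. a i *\<^sub>R y i)" if "summable (\<lambda>n. \<bar>a n\<bar>)" for a
    using sn[OF that] by (rule summable_norm_cancel)
  have add: "J (\<lambda>n. a n + b n) = J a + J b"
    if "summable (\<lambda>n. \<bar>a n\<bar>)" "summable (\<lambda>n. \<bar>b n\<bar>)" for a b
    unfolding J_def using suminf_add[OF sm[OF that(1)] sm[OF that(2)]] by (simp add: scaleR_add_left)
  have scl: "J (\<lambda>n. t * a n) = t *\<^sub>R J a" if "summable (\<lambda>n. \<bar>a n\<bar>)" for a t
    unfolding J_def using suminf_scaleR_right[OF sm[OF that], of t] by simp
  have upper: "norm (J a) \<le> 1 * (\<Sum>n. \<bar>a n\<bar>)" if "summable (\<lambda>n. \<bar>a n\<bar>)" for a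
  proof -
    have "norm (J a) \<le> (\<Sum>i. norm (a i *\<^sub>R y i))" unfolding J_def by (rule summable_norm[OF sn[OF that]])
    also have "\<dots> \<le> (\<Sum>n. \<bar>a n\<bar>)"
      by (rule suminf_le[OF _ sn[OF that] that]) (use ybd in \<open>auto intro: mult_left_le\<close>)
    finally show ?thesis by simp
  qed
  have fin: "(s - r) * (\<Sum>i<k. \<bar>a i\<bar>) \<le> 2 * norm (\<Sum>i<k. a i *\<^sub>R y i)" for a k
  proof -
    obtain g :: "'a \<Rightarrow>\<^sub>L real" where g: "norm g \<le> 1"
      "\<forall>i<k. if a i \<ge> 0 then s \<le> blinfun_apply g (y i) else blinfun_apply g (y i) \<le> r"
      using ind[of k "\<lambda>i. a i \<ge> 0"] by blast
    obtain g' :: "'a \<Rightarrow>\<^sub>L real" where g': "norm g' \<le> 1"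
      "\<forall>i<k. if \<not> a i \<ge> 0 then s \<le> blinfun_apply g' (y i) else blinfun_apply g' (y i) \<le> r"
      using ind[of k "\<lambda>i. \<not> a i \<ge> 0"] by blast
    define h where "h = g - g'"
    have nh: "norm h \<le> 2" unfolding h_def using g g' norm_triangle_ineq4[of g g'] by linarith
    have trm: "(s - r) * \<bar>a i\<bar> \<le> a i * (blinfun_apply g (y i) - blinfun_apply g' (y i))" if "i < k" for i
    proof (cases "a i \<ge> 0")
      case True
      then have "s \<le> blinfun_apply g (y i)" "blinfun_apply g' (y i) \<le> r" using g g' that by auto
      then have "(s - r) * a i \<le> (blinfun_apply g (y i) - blinfun_apply g' (y i)) * a i"
        using True by (intro mult_right_mono) auto
      then show ?thesis using True by (simp add: mult.commute)
    next
      case False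
      then have "blinfun_apply g (y i) \<le> r" "s \<le> blinfun_apply g' (y i)" using g g' that by auto
      then have "(s - r) * (- a i) \<le> (- a i) * (blinfun_apply g' (y i) - blinfun_apply g (y i))"
        using False by (simp add: mult_left_mono mult.commute)
      then show ?thesis using False by (simp add: algebra_simps)
    qed
    have "(s - r) * (\<Sum>i<k. \<bar>a i\<bar>) = (\<Sum>i<k. (s - r) * \<bar>a i\<bar>)" by (simp add: sum_distrib_left)
    also have "\<dots> \<le> (\<Sum>i<k. a i * (blinfun_apply g (y i) - blinfun_apply g' (y i)))"
      by (rule sum_mono) (use trm in auto)
    also have "\<dots> = blinfun_apply h (\<Sum>i<k. a i *\<^sub>R y i)"
      by (simp add: h_def blinfun.sum_right blinfun.scaleR_right blinfun.diff_left algebra_simps)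
    also have "\<dots> \<le> norm h * norm (\<Sum>i<k. a i *\<^sub>R y i)"
      using norm_blinfun[of h "\<Sum>i<k. a i *\<^sub>R y i"] by simp
    also have "\<dots> \<le> 2 * norm (\<Sum>i<k. a i *\<^sub>R y i)" using nh by (simp add: mult_right_mono)
    finally show ?thesis .
  qed
  have lower: "(s - r) / 2 * (\<Sum>n. \<bar>a n\<bar>) \<le> norm (J a)" if "summable (\<lambda>n. \<bar>a n\<bar>)" for a
  proof -
    have l1: "(\<lambda>k. (s - r) * (\<Sum>i<k. \<bar>a i\<bar>)) \<longlonglongrightarrow> (s - r) * (\<Sum>n. \<bar>a n\<bar>)"
      by (intro tendsto_mult tendsto_const summable_LIMSEQ that)
    have l2: "(\<lambda>k. 2 * norm (\<Sum>i<k. a i *\<^sub>R y i)) \<longlonglongrightarrow> 2 * norm (J a)"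
      unfolding J_def by (intro tendsto_mult tendsto_const tendsto_norm summable_LIMSEQ sm that)
    have "(s - r) * (\<Sum>n. \<bar>a n\<bar>) \<le> 2 * norm (J a)"
      by (rule LIMSEQ_le[OF l1 l2]) (use fin in auto)
    then show ?thesis by simp
  qed
  show ?thesis unfolding contains_l1_def
    apply (rule exI[of _ J], rule exI[of _ "(s - r) / 2"], rule exI[of _ 1])
    using rs add scl upper lower by auto
qed

lemma rosenthal:
  fixes x :: "nat \<Rightarrow> 'a::banach"
  assumes noL1: "\<not> contains_l1 TYPE('a)" and bd: "\<And>n. norm (x n) \<le> 1"
  shows "\<exists>\<rho>. strict_mono \<rho> \<and> weakly_cauchy (x \<circ> \<rho>)"
proof -
  define pr where "pr j = (of_rat (fst (from_nat j :: rat \<times> rat)) :: real, of_rat (snd (from_nat j :: rat \<times> rat)) :: real)" for j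
  define \<Omega> where "\<Omega> = {g::'a \<Rightarrow>\<^sub>L real. norm g \<le> 1}"
  define Aj where "Aj j n = {g::'a \<Rightarrow>\<^sub>L real. blinfun_apply g (x n) \<le> fst (pr j)}" for j n
  define Bj where "Bj j n = {g::'a \<Rightarrow>\<^sub>L real. snd (pr j) \<le> blinfun_apply g (x n)}" for j n
  have noosc: "\<not> osc (Aj j) (Bj j) \<Omega> L" if valid: "fst (pr j) < snd (pr j)" and infL: "infinite L" for j L
  proof
    assume "osc (Aj j) (Bj j) \<Omega> L"
    then obtain \<nu> where \<nu>: "strict_mono \<nu>"
      "\<forall>k (\<epsilon>::nat\<Rightarrow>bool). \<exists>w\<in>\<Omega>. \<forall>i<k. if \<epsilon> i then w \<in> Bj j (\<nu> i) else w \<in> Aj j (\<nu> i)"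
      using osc_indep[OF _ infL] by blast
    have "contains_l1 TYPE('a)"
    proof (rule l1_from_indep[of "x \<circ> \<nu>" "fst (pr j)" "snd (pr j)"])
      show "norm ((x \<circ> \<nu>) n) \<le> 1" for n using bd by simp
      show "fst (pr j) < snd (pr j)" by (rule valid)
      fix k and \<epsilon> :: "nat \<Rightarrow> bool"
      obtain w where "w \<in> \<Omega>" "\<forall>i<k. if \<epsilon> i then w \<in> Bj j (\<nu> i) else w \<in> Aj j (\<nu> i)"
        using \<nu>(2) by blast
      then show "\<exists>g::('a \<Rightarrow>\<^sub>L real). norm g \<le> 1 \<and>
        (\<forall>i<k. if \<epsilon> i then snd (pr j) \<le> blinfun_apply g ((x \<circ> \<nu>) i) else blinfun_apply g ((x \<circ> \<nu>) i) \<le> fst (pr j))"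
        by (intro exI[of _ w]) (auto simp: \<Omega>_def Aj_def Bj_def split: if_splits)
    qed
    then show False using noL1 by blast
  qed
  have "\<exists>L'. infinite L \<longrightarrow> L' \<subseteq> L \<and> infinite L' \<and> (fst (pr j) < snd (pr j) \<longrightarrow> conv (Aj j) (Bj j) \<Omega> L')" for j L
  proof (cases "fst (pr j) < snd (pr j) \<and> infinite L")
    case True
    then show ?thesis using noosc[of j L] unfolding osc_def by blast
  next
    case False then show ?thesis by blast
  qed
  note ex = this
  define Ch where "Ch j L = (SOME L'. infinite L \<longrightarrow> L' \<subseteq> L \<and> infinite L' \<and> (fst (pr j) < snd (pr j) \<longrightarrow> conv (Aj j) (Bj j) \<Omega> L'))" for j L
  have Ch: "\<And>j L. infinite L \<Longrightarrow> Ch j L \<subseteq> L \<and> infinite (Ch j L) \<and>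
      (fst (pr j) < snd (pr j) \<longrightarrow> conv (Aj j) (Bj j) \<Omega> (Ch j L))"
    unfolding Ch_def using someI_ex[OF ex] by blast
  define M where "M = rec_nat UNIV (\<lambda>j S. Ch j S)"
  have M0: "M 0 = UNIV" and MS: "M (Suc j) = Ch j (M j)" for j by (simp_all add: M_def)
  have Minf: "infinite (M j)" for j
    by (induction j) (use Ch in \<open>auto simp: M0 MS\<close>)
  have Msub: "M (Suc j) \<subseteq> M j" for j using Ch Minf MS by blast
  have Mmono: "M j \<subseteq> M i" if "i \<le> j" for i j
    using that by (induction j) (use Msub in \<open>auto simp: le_Suc_eq\<close>)
  have Mconv: "conv (Aj j) (Bj j) \<Omega> (M (Suc j))" if "fst (pr j) < snd (pr j)" for j
    using Ch[OF Minf[of j]] that MS by auto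
  define d where "d = rec_nat (Inf (M 1)) (\<lambda>j p. Inf {m \<in> M (Suc (Suc j)). p < m})"
  have d0: "d 0 = Inf (M 1)" and dS: "d (Suc j) = Inf {m \<in> M (Suc (Suc j)). d j < m}" for j
    by (simp_all add: d_def)
  have dprop: "d j \<in> M (Suc j) \<and> d j < d (Suc j)" for j
  proof -
    have ne: "{m \<in> M (Suc (Suc i)). d i < m} \<noteq> {}" for i
      using infinite_gt[OF Minf[of "Suc (Suc i)"], of "d i"] by (metis finite.emptyI)
    have in1: "d (Suc i) \<in> M (Suc (Suc i)) \<and> d i < d (Suc i)" for i
      using Inf_nat_def1[OF ne[of i]] unfolding dS by simp
    have "d j \<in> M (Suc j)"
    proof (cases j)
      case 0
      have "M 1 \<noteq> {}" using Minf[of 1] by auto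
      then show ?thesis using Inf_nat_def1 0 d0 by simp
    next
      case (Suc i) then show ?thesis using in1[of i] by simp
    qed
    then show ?thesis using in1[of j] by simp
  qed
  have dsm: "strict_mono d" unfolding strict_mono_Suc_iff using dprop by blast
  have dM: "d i \<in> M (Suc j)" if "j \<le> i" for i j
    using dprop[of i] Mmono[of "Suc j" "Suc i"] that by auto
  have cauchyO: "convergent (\<lambda>i. blinfun_apply h (x (d i)))" if hO: "h \<in> \<Omega>" for h
  proof (rule no_osc_convergent[where K=1])
    show "\<bar>blinfun_apply h (x (d i))\<bar> \<le> 1" for i
    proof -
      have "\<bar>blinfun_apply h (x (d i))\<bar> \<le> norm h * norm (x (d i))"
        using norm_blinfun[of h "x (d i)"] by simp
      also have "\<dots> \<le> 1 * 1" using hO bd[of "d i"] by (intro mult_mono) (auto simp: \<Omega>_def)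
      finally show ?thesis by simp
    qed
    fix q1 q2 :: rat
    assume q: "of_rat q1 < (of_rat q2::real)"
    define j where "j = to_nat (q1, q2)"
    have prj: "pr j = (of_rat q1, of_rat q2)" by (simp add: pr_def j_def)
    have cj: "conv (Aj j) (Bj j) \<Omega> (M (Suc j))" using Mconv prj q by simp
    show "finite {i. blinfun_apply h (x (d i)) \<le> of_rat q1} \<or> finite {i. of_rat q2 \<le> blinfun_apply h (x (d i))}"
    proof (rule ccontr)
      assume "\<not> ?thesis"
      then have i1: "infinite {i. blinfun_apply h (x (d i)) \<le> of_rat q1}"
            and i2: "infinite {i. of_rat q2 \<le> blinfun_apply h (x (d i))}" by auto
      have fix_inf: "infinite (d ` {i\<in>S. j \<le> i})" if "infinite S" for S
      proof -
        have "S \<subseteq> {i\<in>S. j \<le> i} \<union> {..<j}" by auto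
        then have "infinite {i\<in>S. j \<le> i}" using that by (meson finite_Un finite_lessThan finite_subset)
        then show ?thesis using strict_mono_imp_inj_on[OF dsm] finite_imageD inj_on_subset by (metis subset_UNIV)
      qed
      have "d ` {i\<in>{i. blinfun_apply h (x (d i)) \<le> of_rat q1}. j \<le> i} \<subseteq> {n\<in>M (Suc j). h \<in> Aj j n}"
        using dM by (auto simp: Aj_def prj)
      moreover have "d ` {i\<in>{i. of_rat q2 \<le> blinfun_apply h (x (d i))}. j \<le> i} \<subseteq> {n\<in>M (Suc j). h \<in> Bj j n}"
        using dM by (auto simp: Bj_def prj)
      ultimately have "infinite {n\<in>M (Suc j). h \<in> Aj j n}" "infinite {n\<in>M (Suc j). h \<in> Bj j n}"
        using fix_inf[OF i1] fix_inf[OF i2] finite_subset by blast+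
      then show False using cj hO unfolding conv_def by blast
    qed
  qed
  have "weakly_cauchy (x \<circ> d)"
    unfolding weakly_cauchy_def
  proof
    fix g :: "'a \<Rightarrow>\<^sub>L real"
    define c where "c = norm g + 1"
    have c: "c > 0" unfolding c_def by (simp add: add_nonneg_pos)
    define h where "h = (1 / c) *\<^sub>R g"
    have "norm h \<le> 1" using c unfolding h_def c_def by (simp add: field_simps)
    then have "convergent (\<lambda>i. blinfun_apply h (x (d i)))" using cauchyO \<Omega>_def by blast
    then have "convergent (\<lambda>i. c * blinfun_apply h (x (d i)))"
      by (auto simp: convergent_def intro: tendsto_mult_left)
    moreover have "c * blinfun_apply h z = blinfun_apply g z" for z
      using c by (simp add: h_def blinfun.scaleR_left)
    ultimately have "convergent (\<lambda>i. blinfun_apply g (x (d i)))" by simp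
    then show "Cauchy (\<lambda>n. blinfun_apply g ((x \<circ> d) n))" by (simp add: Cauchy_convergent_iff)
  qed
  then show ?thesis using dsm by blast
qed


lemma norm_le_ball:
  fixes \<phi> :: "'a::real_normed_vector \<Rightarrow>\<^sub>L real"
  assumes e: "e \<ge> 0" and H: "\<And>a. a \<in> ball 0 1 \<Longrightarrow> \<bar>blinfun_apply \<phi> a\<bar> \<le> e"
  shows "norm \<phi> \<le> e"
proof (rule norm_blinfun_bound[OF e])
  fix z
  show "norm (blinfun_apply \<phi> z) \<le> e * norm z"
  proof (rule field_le_epsilon)
    fix \<eta> :: real assume \<eta>: "\<eta> > 0"
    define c where "c = norm z + \<eta> / (e + 1)"
    have c: "c > 0" "c > norm z" using \<eta> e by (auto simp: c_def add_nonneg_pos)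
    have "(1/c) *\<^sub>R z \<in> ball 0 1" using c by (simp add: field_simps)
    then have "\<bar>blinfun_apply \<phi> ((1/c) *\<^sub>R z)\<bar> \<le> e" by (rule H)
    then have "\<bar>blinfun_apply \<phi> z\<bar> / c \<le> e" using c by (simp add: blinfun.scaleR_right abs_mult)
    then have "\<bar>blinfun_apply \<phi> z\<bar> \<le> e * c" using c by (simp add: field_simps)
    also have "\<dots> = e * norm z + e * (\<eta> / (e + 1))" by (simp add: c_def algebra_simps)
    also have "\<dots> \<le> e * norm z + \<eta>"
    proof -
      have "e * (\<eta> / (e + 1)) \<le> \<eta>" using e \<eta> by (simp add: field_simps)
      then show ?thesis by simp
    qed
    finally show "norm (blinfun_apply \<phi> z) \<le> e * norm z + \<eta>" by simp
  qed
qed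

lemma weakly_null_UB:
  fixes y :: "nat \<Rightarrow> 'a::real_normed_vector"
  assumes "weakly_null y"
  shows "\<exists>M\<ge>0. \<forall>n. \<forall>g::('a \<Rightarrow>\<^sub>L real). \<bar>blinfun_apply g (y n)\<bar> \<le> M * norm g"
proof -
  have "\<exists>B. \<forall>n. \<bar>blinfun_apply g (y n)\<bar> \<le> B" for g :: "'a \<Rightarrow>\<^sub>L real"
  proof -
    have "convergent (\<lambda>n. blinfun_apply g (y n))" using assms unfolding weakly_null_def convergent_def by blast
    then have "Bseq (\<lambda>n. blinfun_apply g (y n))" by (rule convergent_imp_Bseq)
    then show ?thesis unfolding Bseq_def by auto
  qed
  then obtain M where M: "\<forall>n. \<forall>g::('a \<Rightarrow>\<^sub>L real). \<bar>blinfun_apply g (y n)\<bar> \<le> M * norm g"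
    using UB[of y] by blast
  have "\<bar>blinfun_apply g (y n)\<bar> \<le> max M 0 * norm g" for g :: "'a \<Rightarrow>\<^sub>L real" and n :: nat
  proof -
    have "\<bar>blinfun_apply g (y n)\<bar> \<le> M * norm g" using M by blast
    moreover have "M * norm g \<le> max M 0 * norm g" by (rule mult_right_mono) auto
    ultimately show ?thesis by (rule order_trans)
  qed
  then show ?thesis by (intro exI[of _ "max M 0"]) auto
qed

lemma compact_transpose_cc:
  fixes P Q :: "'a::real_normed_vector \<Rightarrow> ('a \<Rightarrow>\<^sub>L real)"
  assumes tr: "\<And>a y. blinfun_apply (P a) y = blinfun_apply (Q y) a"
    and cpt: "compact (closure (P ` ball 0 1))"
  shows "completely_continuous Q"
  unfolding completely_continuous_def
proof (intro allI impI)
  fix y :: "nat \<Rightarrow> 'a" assume wn: "weakly_null y"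
  obtain M where M0: "M \<ge> 0" and M: "\<And>n g. \<bar>blinfun_apply g (y n)\<bar> \<le> M * norm g"
    using weakly_null_UB[OF wn] by blast
  define K where "K = closure (P ` ball 0 1)"
  have ev: "eventually (\<lambda>n. norm (Q (y n)) \<le> e) sequentially" if e: "e > 0" for e
  proof -
    define \<delta> where "\<delta> = e / (2 * (M + 1))"
    have M1: "M + 1 > 0" using M0 by linarith
    have M1': "M + 1 \<noteq> 0" using M0 by linarith
    have \<delta>: "\<delta> > 0" unfolding \<delta>_def using e M1 by (intro divide_pos_pos mult_pos_pos) auto
    have "\<exists>k. finite k \<and> k \<subseteq> K \<and> K \<subseteq> (\<Union>h\<in>k. ball h \<delta>)"
      using seq_compact_imp_totally_bounded[OF compact_imp_seq_compact[OF cpt[folded K_def]], rule_format, OF \<delta>] .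
    then obtain k where k: "finite k" "k \<subseteq> K" "K \<subseteq> (\<Union>h\<in>k. ball h \<delta>)" by (elim exE conjE)
    have "\<forall>h\<in>k. eventually (\<lambda>n. \<bar>blinfun_apply h (y n)\<bar> \<le> e/2) sequentially"
    proof
      fix h assume "h \<in> k"
      have "(\<lambda>n. blinfun_apply h (y n)) \<longlonglongrightarrow> 0" using wn unfolding weakly_null_def by blast
      then have "eventually (\<lambda>n. dist (blinfun_apply h (y n)) 0 < e/2) sequentially"
        using e by (intro tendstoD) auto
      then show "eventually (\<lambda>n. \<bar>blinfun_apply h (y n)\<bar> \<le> e/2) sequentially"
        by (rule eventually_mono) auto
    qed
    then have "eventually (\<lambda>n. \<forall>h\<in>k. \<bar>blinfun_apply h (y n)\<bar> \<le> e/2) sequentially"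
      by (rule eventually_ball_finite[OF k(1)])
    then show ?thesis
    proof (rule eventually_mono)
      fix n assume hk: "\<forall>h\<in>k. \<bar>blinfun_apply h (y n)\<bar> \<le> e/2"
      show "norm (Q (y n)) \<le> e"
      proof (rule norm_le_ball)
        show "e \<ge> 0" using e by simp
        fix a :: 'a assume a: "a \<in> ball 0 1"
        have "P a \<in> P ` ball 0 1" using a by (rule imageI)
        then have "P a \<in> K" unfolding K_def using closure_subset by (rule subsetD[rotated])
        then have "P a \<in> (\<Union>h\<in>k. ball h \<delta>)" using k(3) by (rule subsetD[rotated])
        then obtain h where h: "h \<in> k" "dist h (P a) < \<delta>" by (auto simp only: UN_iff mem_ball)
        have "\<bar>blinfun_apply (P a - h) (y n)\<bar> \<le> M * norm (P a - h)" by (rule M)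
        also have "\<dots> \<le> M * \<delta>"
        proof (rule mult_left_mono)
          have "norm (P a - h) = dist (P a) h" by (simp add: dist_norm)
          also have "\<dots> = dist h (P a)" by (rule dist_commute)
          finally show "norm (P a - h) \<le> \<delta>" using h(2) by linarith
        qed (rule M0)
        also have "\<dots> \<le> e/2"
        proof -
          have "M * \<delta> \<le> (M + 1) * \<delta>" using \<delta> by (intro mult_right_mono) auto
          also have "(M + 1) * \<delta> = e/2" unfolding \<delta>_def using M1 by (simp add: divide_simps)
          finally show ?thesis .
        qed
        finally have d1: "\<bar>blinfun_apply (P a - h) (y n)\<bar> \<le> e/2" .
        have "blinfun_apply (Q (y n)) a = blinfun_apply (P a - h) (y n) + blinfun_apply h (y n)"
          by (simp add: tr[symmetric] blinfun.diff_left)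
        then have "\<bar>blinfun_apply (Q (y n)) a\<bar> \<le> \<bar>blinfun_apply (P a - h) (y n)\<bar> + \<bar>blinfun_apply h (y n)\<bar>"
          by (simp only: abs_triangle_ineq)
        moreover have "\<bar>blinfun_apply h (y n)\<bar> \<le> e/2" using hk h(1) by blast
        ultimately show "\<bar>blinfun_apply (Q (y n)) a\<bar> \<le> e" using d1 by linarith
      qed
    qed
  qed
  show "(\<lambda>n. Q (y n)) \<longlonglongrightarrow> 0"
  proof (rule LIMSEQ_I)
    fix r :: real assume r: "r > 0"
    have "eventually (\<lambda>n. norm (Q (y n)) \<le> r/2) sequentially" by (rule ev) (use r in simp)
    then obtain N where N: "\<forall>n\<ge>N. norm (Q (y n)) \<le> r/2" unfolding eventually_sequentially by blast
    show "\<exists>N. \<forall>n\<ge>N. norm (Q (y n) - 0) < r"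
    proof (intro exI allI impI)
      fix n assume "N \<le> n"
      then have "norm (Q (y n)) \<le> r/2" using N by blast
      then show "norm (Q (y n) - 0) < r" using r by simp
    qed
  qed
qed

lemma cc_compact:
  fixes T :: "'a::real_normed_vector \<Rightarrow> 'b::banach"
  assumes lin: "\<And>a b. T (a - b) = T a - T b" and cc: "completely_continuous T"
    and wp: "weakly_precompact (ball (0::'a) 1)"
  shows "compact (closure (T ` ball 0 1))"
  unfolding compact_def
proof (intro allI impI)
  fix z :: "nat \<Rightarrow> 'b" assume z: "\<forall>n. z n \<in> closure (T ` ball 0 1)"
  have "\<exists>x. x \<in> ball 0 1 \<and> dist (T x) (z n) < 1 / real (Suc n)" for n
  proof -
    have "\<forall>\<epsilon>>0. \<exists>y\<in>ball 0 1. dist (T y) (z n) < \<epsilon>"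
      using z[rule_format, of n] unfolding closure_approachable by (auto simp: dist_commute)
    moreover have "1 / real (Suc n) > 0" by simp
    ultimately show ?thesis by blast
  qed
  then have "\<forall>n. \<exists>x. x \<in> ball 0 1 \<and> dist (T x) (z n) < 1 / real (Suc n)" by blast
  from choice[OF this] obtain x where x0: "\<forall>n. x n \<in> ball 0 1 \<and> dist (T (x n)) (z n) < 1 / real (Suc n)" by blast
  then have x: "\<And>n. x n \<in> ball 0 1" "\<And>n. dist (T (x n)) (z n) < 1 / real (Suc n)" by auto
  obtain r where r: "strict_mono r" "weakly_cauchy (x \<circ> r)" using wp x(1) unfolding weakly_precompact_def by blast
  have cau: "Cauchy (\<lambda>n. T (x (r n)))"
  proof (rule ccontr)
    assume "\<not> ?thesis"
    then obtain e where e: "e > 0" "\<forall>N. \<exists>p\<ge>N. \<exists>q\<ge>N. \<not> dist (T (x (r p))) (T (x (r q))) < e"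
      unfolding Cauchy_def by blast
    have "\<forall>N. \<exists>pq. fst pq \<ge> N \<and> snd pq \<ge> N \<and> \<not> dist (T (x (r (fst pq)))) (T (x (r (snd pq)))) < e"
    proof
      fix N
      obtain p q where "p \<ge> N" "q \<ge> N" "\<not> dist (T (x (r p))) (T (x (r q))) < e" using e(2) by blast
      then show "\<exists>pq. fst pq \<ge> N \<and> snd pq \<ge> N \<and> \<not> dist (T (x (r (fst pq)))) (T (x (r (snd pq)))) < e"
        by (intro exI[of _ "(p, q)"]) simp
    qed
    from choice[OF this] obtain PQ where PQ: "\<forall>N. fst (PQ N) \<ge> N \<and> snd (PQ N) \<ge> N \<and> \<not> dist (T (x (r (fst (PQ N))))) (T (x (r (snd (PQ N))))) < e"
      by blast
    define p where "p N = fst (PQ N)" for N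
    define q where "q N = snd (PQ N)" for N
    have pq: "\<And>N. p N \<ge> N \<and> q N \<ge> N \<and> \<not> dist (T (x (r (p N)))) (T (x (r (q N)))) < e"
      using PQ by (simp add: p_def q_def)
    define u where "u k = x (r (p k)) - x (r (q k))" for k
    have "weakly_null u" unfolding weakly_null_def
    proof
      fix g :: "'a \<Rightarrow>\<^sub>L real"
      have cg: "Cauchy (\<lambda>n. blinfun_apply g (x (r n)))" using r(2) unfolding weakly_cauchy_def by auto
      show "(\<lambda>n. blinfun_apply g (u n)) \<longlonglongrightarrow> 0"
      proof (rule LIMSEQ_I)
        fix \<epsilon> :: real assume "\<epsilon> > 0"
        then obtain N where N: "\<forall>m\<ge>N. \<forall>n\<ge>N. dist (blinfun_apply g (x (r m))) (blinfun_apply g (x (r n))) < \<epsilon>"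
          using cg unfolding Cauchy_def by blast
        show "\<exists>N. \<forall>n\<ge>N. norm (blinfun_apply g (u n) - 0) < \<epsilon>"
        proof (intro exI allI impI)
          fix n assume "N \<le> n"
          then have "p n \<ge> N" "q n \<ge> N" using pq[of n] by auto
          then show "norm (blinfun_apply g (u n) - 0) < \<epsilon>"
            using N by (simp add: u_def blinfun.diff_right dist_real_def)
        qed
      qed
    qed
    then have "(\<lambda>n. T (u n)) \<longlonglongrightarrow> 0" using cc unfolding completely_continuous_def by blast
    then obtain N where "\<forall>n\<ge>N. norm (T (u n) - 0) < e" using LIMSEQ_D[OF _ e(1)] by blast
    then have "norm (T (u N)) < e" by auto
    moreover have "norm (T (u N)) = dist (T (x (r (p N)))) (T (x (r (q N))))"
      by (simp add: u_def lin dist_norm)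
    ultimately show False using pq[of N] by simp
  qed
  then have "convergent (\<lambda>n. T (x (r n)))" by (simp add: Cauchy_convergent_iff)
  then obtain l where l: "(\<lambda>n. T (x (r n))) \<longlonglongrightarrow> l" unfolding convergent_def by blast
  have "(z \<circ> r) \<longlonglongrightarrow> l"
  proof (rule Lim_transform)
    show "(\<lambda>n. T (x (r n))) \<longlonglongrightarrow> l" by (rule l)
    show "(\<lambda>n. (z \<circ> r) n - T (x (r n))) \<longlonglongrightarrow> 0"
    proof (rule LIMSEQ_I)
      fix \<epsilon> :: real assume \<epsilon>: "\<epsilon> > 0"
      obtain N :: nat where N: "1 / real (Suc N) < \<epsilon>" by (rule nat_approx_posE[OF \<epsilon>])
      show "\<exists>N. \<forall>n\<ge>N. norm ((z \<circ> r) n - T (x (r n)) - 0) < \<epsilon>"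
      proof (intro exI allI impI)
        fix n assume "N \<le> n"
        moreover have "n \<le> r n" by (rule strict_mono_imp_increasing[OF r(1)])
        ultimately have "N \<le> r n" by (rule order_trans)
        then have a1: "1 / real (Suc (r n)) \<le> 1 / real (Suc N)" by (intro frac_le) auto
        have "norm ((z \<circ> r) n - T (x (r n)) - 0) = dist (z (r n)) (T (x (r n)))" by (simp add: dist_norm)
        also have "\<dots> = dist (T (x (r n))) (z (r n))" by (rule dist_commute)
        finally show "norm ((z \<circ> r) n - T (x (r n)) - 0) < \<epsilon>"
          using x(2)[of "r n"] N a1 by linarith
      qed
    qed
  qed
  moreover have "l \<in> closure (T ` ball 0 1)"
    by (rule closed_sequentially[OF closed_closure _ calculation]) (use z in auto)
  ultimately show "\<exists>l\<in>closure (T ` ball 0 1). \<exists>r. strict_mono r \<and> (z \<circ> r) \<longlonglongrightarrow> l" using r(1) by blast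
qed


lemma wp_UB:
  fixes Y :: "'a::real_normed_vector set"
  assumes wp: "weakly_precompact Y"
  shows "\<exists>M\<ge>0. \<forall>a\<in>Y. \<forall>g::('a \<Rightarrow>\<^sub>L real). \<bar>blinfun_apply g a\<bar> \<le> M * norm g"
proof (rule ccontr)
  assume neg: "\<not> ?thesis"
  then have "\<exists>a\<in>Y. \<exists>g::('a \<Rightarrow>\<^sub>L real). \<bar>blinfun_apply g a\<bar> > real n * norm g" for n :: nat
  proof -
    have "\<not> (\<forall>a\<in>Y. \<forall>g::('a \<Rightarrow>\<^sub>L real). \<bar>blinfun_apply g a\<bar> \<le> real n * norm g)"
      using neg of_nat_0_le_iff by blast
    then show ?thesis by (auto simp: not_le)
  qed
  then have "\<forall>n::nat. \<exists>ag. fst ag \<in> Y \<and> \<bar>blinfun_apply (snd ag) (fst ag)\<bar> > real n * norm (snd ag :: 'a \<Rightarrow>\<^sub>L real)"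
    by force
  from choice[OF this] obtain AG where AG: "\<forall>n. fst (AG n) \<in> Y \<and> \<bar>blinfun_apply (snd (AG n)) (fst (AG n))\<bar> > real n * norm (snd (AG n) :: 'a \<Rightarrow>\<^sub>L real)"
    by blast
  define a where "a n = fst (AG n)" for n
  define g where "g n = snd (AG n)" for n
  have ag: "\<And>n. a n \<in> Y" "\<And>n. \<bar>blinfun_apply (g n) (a n)\<bar> > real n * norm (g n)"
    using AG by (auto simp: a_def g_def)
  obtain r where r: "strict_mono r" "weakly_cauchy (a \<circ> r)" using wp ag(1) unfolding weakly_precompact_def by blast
  have "\<exists>B. \<forall>n. \<bar>blinfun_apply h ((a \<circ> r) n)\<bar> \<le> B" for h :: "'a \<Rightarrow>\<^sub>L real"
  proof -
    have "Cauchy (\<lambda>n. blinfun_apply h ((a \<circ> r) n))" using r(2) unfolding weakly_cauchy_def by blast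
    then have "Bseq (\<lambda>n. blinfun_apply h ((a \<circ> r) n))" by (rule Cauchy_Bseq)
    then show ?thesis unfolding Bseq_def by auto
  qed
  then obtain M where M: "\<forall>n. \<forall>h::('a \<Rightarrow>\<^sub>L real). \<bar>blinfun_apply h ((a \<circ> r) n)\<bar> \<le> M * norm h"
    using UB[of "a \<circ> r"] by blast
  obtain k :: nat where k: "M < real k" using reals_Archimedean2 by blast
  have rk: "real k \<le> real (r k)" using strict_mono_imp_increasing[OF r(1)] by simp
  have gpos: "norm (g (r k)) > 0"
  proof (rule ccontr)
    assume "\<not> ?thesis"
    then have "g (r k) = 0" by simp
    then show False using ag(2)[of "r k"] by simp
  qed
  have "real (r k) * norm (g (r k)) < M * norm (g (r k))"
  proof -
    have "\<bar>blinfun_apply (g (r k)) ((a \<circ> r) k)\<bar> \<le> M * norm (g (r k))" using M by blast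
    then show ?thesis using ag(2)[of "r k"] by simp
  qed
  then have "real (r k) < M" using gpos by simp
  then show False using k rk by simp
qed

lemma T_apply: "blinfun_apply (T_op f a) y = blinfun_apply f (a * y)"
  by (simp add: T_op_def dual_lmod_def)

lemma S_apply: "blinfun_apply (S_op f a) y = blinfun_apply f (y * a)"
  by (simp add: S_op_def dual_rmod_def)

lemma T_diff: "T_op f (a - b) = T_op f a - T_op f b"
  by (rule blinfun_eqI) (simp add: T_apply blinfun.diff_left blinfun.diff_right left_diff_distrib)

lemma S_diff: "S_op f (a - b) = S_op f a - S_op f b"
  by (rule blinfun_eqI) (simp add: S_apply blinfun.diff_left blinfun.diff_right right_diff_distrib)

theorem mainTheorem4:
  assumes "\<not> contains_l1 TYPE('a::{real_normed_algebra, banach})"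
  shows "(wpL :: ('a \<Rightarrow>\<^sub>L real) set) = cc \<and> (cc :: ('a \<Rightarrow>\<^sub>L real) set) = ap"
proof -
  have wpb: "weakly_precompact (ball (0::'a) 1)"
    unfolding weakly_precompact_def
  proof (intro allI impI)
    fix x :: "nat \<Rightarrow> 'a" assume "\<forall>n. x n \<in> ball 0 1"
    then have "norm (x n) \<le> 1" for n by (simp add: less_imp_le)
    then show "\<exists>r. strict_mono r \<and> weakly_cauchy (x \<circ> r)" using rosenthal[OF assms] by blast
  qed
  have ap_rcc: "f \<in> rcc" if "f \<in> (ap :: ('a \<Rightarrow>\<^sub>L real) set)" for f
  proof -
    have "completely_continuous (S_op f)"
      by (rule compact_transpose_cc[of "T_op f"]) (use that in \<open>auto simp: ap_def compact_op_def T_apply S_apply\<close>)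
    then show ?thesis by (simp add: rcc_def)
  qed
  have rcc_lcc: "f \<in> lcc" if "f \<in> (rcc :: ('a \<Rightarrow>\<^sub>L real) set)" for f
  proof -
    have "compact (closure (S_op f ` ball 0 1))"
      by (rule cc_compact[OF S_diff _ wpb]) (use that in \<open>simp add: rcc_def\<close>)
    then have "completely_continuous (T_op f)"
      by (intro compact_transpose_cc[of "S_op f"]) (auto simp: T_apply S_apply)
    then show ?thesis by (simp add: lcc_def)
  qed
  have lcc_ap: "f \<in> ap" if "f \<in> (lcc :: ('a \<Rightarrow>\<^sub>L real) set)" for f
  proof -
    have "compact (closure (T_op f ` ball 0 1))"
      by (rule cc_compact[OF T_diff _ wpb]) (use that in \<open>simp add: lcc_def\<close>)
    then show ?thesis by (simp add: ap_def compact_op_def)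
  qed
  have rcc_wpL: "f \<in> wpL" if "f \<in> (rcc :: ('a \<Rightarrow>\<^sub>L real) set)" for f
    unfolding wpL_def mem_Collect_eq
  proof (intro allI impI)
    fix Y :: "'a set" assume "weakly_precompact Y"
    then obtain M where M0: "M \<ge> 0" and M: "\<forall>a\<in>Y. \<forall>g::('a \<Rightarrow>\<^sub>L real). \<bar>blinfun_apply g a\<bar> \<le> M * norm g"
      using wp_UB by blast
    show "L_set (T_op f ` Y)" unfolding L_set_def
    proof (intro allI impI)
      fix x :: "nat \<Rightarrow> 'a" and e :: real assume wn: "weakly_null x" and e: "e > 0"
      have "(\<lambda>n. S_op f (x n)) \<longlonglongrightarrow> 0" using that wn by (simp add: rcc_def completely_continuous_def)
      moreover have "e / (M + 1) > 0" using e M0 by simp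
      ultimately have "eventually (\<lambda>n. dist (S_op f (x n)) 0 < e / (M + 1)) sequentially"
        by (rule tendstoD)
      then show "eventually (\<lambda>n. \<forall>g\<in>T_op f ` Y. \<bar>blinfun_apply g (x n)\<bar> \<le> e) sequentially"
      proof (rule eventually_mono)
        fix n assume n: "dist (S_op f (x n)) 0 < e / (M + 1)"
        show "\<forall>g\<in>T_op f ` Y. \<bar>blinfun_apply g (x n)\<bar> \<le> e"
        proof
          fix g assume "g \<in> T_op f ` Y"
          then obtain a where a: "a \<in> Y" "g = T_op f a" by blast
          have "\<bar>blinfun_apply g (x n)\<bar> = \<bar>blinfun_apply (S_op f (x n)) a\<bar>" by (simp add: a T_apply S_apply)
          also have "\<dots> \<le> M * norm (S_op f (x n))" using M a by blast
          also have "\<dots> \<le> M * (e / (M + 1))" using n M0 by (intro mult_left_mono) auto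
          also have "\<dots> \<le> e"
          proof -
            have "M * (e / (M + 1)) = e * (M / (M + 1))" by simp
            also have "\<dots> \<le> e * 1" using M0 e by (intro mult_left_mono) auto
            finally show ?thesis by simp
          qed
          finally show "\<bar>blinfun_apply g (x n)\<bar> \<le> e" .
        qed
      qed
    qed
  qed
  have wpL_rcc: "f \<in> rcc" if "f \<in> (wpL :: ('a \<Rightarrow>\<^sub>L real) set)" for f
  proof -
    have L: "L_set (T_op f ` ball 0 1)" using that wpb by (simp add: wpL_def)
    have "completely_continuous (S_op f)" unfolding completely_continuous_def
    proof (intro allI impI)
      fix x :: "nat \<Rightarrow> 'a" assume wn: "weakly_null x"
      show "(\<lambda>n. S_op f (x n)) \<longlonglongrightarrow> 0"
      proof (rule LIMSEQ_I)
        fix r :: real assume r: "r > 0"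
        have "eventually (\<lambda>n. \<forall>g\<in>T_op f ` ball 0 1. \<bar>blinfun_apply g (x n)\<bar> \<le> r/2) sequentially"
        proof -
          have "\<forall>e>0. \<forall>\<^sub>F n in sequentially. \<forall>g\<in>T_op f ` ball 0 1. \<bar>blinfun_apply g (x n)\<bar> \<le> e"
            using L wn unfolding L_set_def by blast
          then show ?thesis using r half_gt_zero by blast
        qed
        then obtain N where N: "\<forall>n\<ge>N. \<forall>g\<in>T_op f ` ball 0 1. \<bar>blinfun_apply g (x n)\<bar> \<le> r/2"
          unfolding eventually_sequentially by blast
        show "\<exists>N. \<forall>n\<ge>N. norm (S_op f (x n) - 0) < r"
        proof (intro exI allI impI)
          fix n assume "N \<le> n"
          have "norm (S_op f (x n)) \<le> r/2"
          proof (rule norm_le_ball)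
            show "r/2 \<ge> 0" using r by simp
            fix a :: 'a assume "a \<in> ball 0 1"
            then have "\<bar>blinfun_apply (T_op f a) (x n)\<bar> \<le> r/2" using N \<open>N \<le> n\<close> by blast
            then show "\<bar>blinfun_apply (S_op f (x n)) a\<bar> \<le> r/2" by (simp add: T_apply S_apply)
          qed
          then show "norm (S_op f (x n) - 0) < r" using r by simp
        qed
      qed
    qed
    then show ?thesis by (simp add: rcc_def)
  qed
  have e1: "(rcc :: ('a \<Rightarrow>\<^sub>L real) set) = ap"
  proof (rule set_eqI)
    fix f :: "'a \<Rightarrow>\<^sub>L real"
    show "f \<in> rcc \<longleftrightarrow> f \<in> ap" using ap_rcc[of f] rcc_lcc[of f] lcc_ap[of f] by blast
  qed
  have e2: "(lcc :: ('a \<Rightarrow>\<^sub>L real) set) = ap"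
  proof (rule set_eqI)
    fix f :: "'a \<Rightarrow>\<^sub>L real"
    show "f \<in> lcc \<longleftrightarrow> f \<in> ap" using ap_rcc[of f] rcc_lcc[of f] lcc_ap[of f] by blast
  qed
  have e3: "(wpL :: ('a \<Rightarrow>\<^sub>L real) set) = rcc"
  proof (rule set_eqI)
    fix f :: "'a \<Rightarrow>\<^sub>L real"
    show "f \<in> wpL \<longleftrightarrow> f \<in> rcc" using rcc_wpL[of f] wpL_rcc[of f] by blast
  qed
  have e4: "(cc :: ('a \<Rightarrow>\<^sub>L real) set) = ap" using e1 e2 by (simp add: cc_def)
  show ?thesis using e1 e3 e4 by simp
qed

end
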